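(* Let $m\equiv n\equiv 0\pmod 3$, $u\equiv 2,4\pmod 6$, $v=2m+2n+u$, $c<\binom u3$, and let $(u,c)$ satisfy (C2) with associated pair $(\lambda,\delta)$. Suppose (i) $(V,\mathcal A)$ is a simple NGDD$(2,3,v)$ of type $2^{(m,n)}u^1$ with size-2 groups $G_1,\dots,G_{m+n}$ and group $U$ of size $u$; (ii) $(V,\mathcal B)$ is a simple GDD$_{\lambda-1}(2,3,v)$ of type $1^{2m+2n}u^1$ with long group $U$; and (iii) $(U,\mathcal C)$ is an NWBTS$(u;c)$. If $\mathcal A,\mathcal B,\mathcal C$ are pairwise disjoint, then $\mathcal F=\mathcal A\cup\mathcal B\cup\mathcal C$ is the block set of an NWBTS$(v;|\mathcal F|)$, where $3|\mathcal F|=\lambda\binom v2+m-n+\delta$.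
   Context: NGDD$(2,3,v)$ of type $2^{(m,n)}u^1$: $V$ is a set of $v=2(m+n)+u$ points partitioned into groups $G_1,\dots,G_{m+n}$ of size 2 and $U$ of size $u$; a set of triples on $V$ such that each pair $G_i$ with $1\le i\le m$ lies in exactly two blocks, each pair in $\binom U2\cup\{G_i:m<i\le m+n\}$ lies in no block, and every other pair of $V$ lies in exactly one block. A GDD$_\mu(2,3,v)$ of type $1^{v-u}u^1$ with long group $U$: triples on $V$, none containing two points of $U$, every pair not inside $U$ in exactly $\mu$ blocks. Simple: no repeated blocks. A triple system TS$(v;b)$ is a pair $(V,\mathcal F)$, $V$ a set of $v\ge3$ points, $\mathcal F$ a multiset of $b$ 3-subsets (blocks). $\lambda_{x_1,\dots,x_j}$ is the number of blocks containing $\{x_1,\dots,x_j\}$; $j$-balanced means $|\lambda_{x_1,\dots,x_j}-\lambda_{y_1,\dots,y_j}|\le1$ for all $j$-subsets. Associated pair $(\lambda,\varepsilon)$ of $(v,b)$: $3b=\lambda\binom v2+\varepsilon$, $-v/2<\varepsilon<v/2$. (C2): $v$ even and $\lambda v(v-1)/6-v/6<b<\lambda v(v-1)/6+v/6$ for odd $\lambda$ (the $\lambda$ of the associated pair). Defect graph (when all $\lambda_{x,y}\in\{\lambda-1,\lambda,\lambda+1\}$): graph on $V$ with edges of pairs with $\lambda_{x,y}=\lambda+1$ (label $+1$) or $\lambda-1$ (label $-1$); isomorphisms preserve labels. $H^0_{v,\varepsilon}$: perfect matching with $(v+2\varepsilon)/4$ edges $+1$, $(v-2\varepsilon)/4$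 edges $-1$; $H^1_{v,\varepsilon}$: disjoint union of a $K_{1,3}$ with two $+1$ and one $-1$ edge and a matching of the other $v-4$ vertices with $(v-6+2\varepsilon)/4$ edges $+1$, $(v-2-2\varepsilon)/4$ edges $-1$; $H^2_{v,\varepsilon}$: disjoint union of a $K_{1,3}$ with one $+1$ and two $-1$ edges and a matching of the other $v-4$ vertices with $(v-2+2\varepsilon)/4$ edges $+1$, $(v-6-2\varepsilon)/4$ edges $-1$. Under (C2) a TS is nearly 2-balanced if all $\lambda_{x,y}\in\{\lambda-1,\lambda,\lambda+1\}$ and its defect graph is $\cong H^0_{v,\varepsilon}$ when $\varepsilon\equiv v/2\pmod 2$, and $\cong H^1_{v,\varepsilon}$ or $H^2_{v,\varepsilon}$ otherwise. An NWBTS is a nearly 2-balanced, 3-balanced TS. *)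

theory Defs
  imports Main "HOL-Library.Multiset"
begin

definition lam :: "'a set multiset \<Rightarrow> 'a set \<Rightarrow> nat" where
  "lam F S = size (filter_mset (\<lambda>B. S \<subseteq> B) F)"

definition TS :: "'a set \<Rightarrow> 'a set multiset \<Rightarrow> bool" where
  "TS V F \<longleftrightarrow> finite V \<and> card V \<ge> 3 \<and> (\<forall>B\<in>#F. B \<subseteq> V \<and> card B = 3)"

definition assoc_pair :: "nat \<Rightarrow> nat \<Rightarrow> int \<Rightarrow> int \<Rightarrow> bool" where
  "assoc_pair v b l e \<longleftrightarrow> 3 * int b = l * int (v choose 2) + e \<and> - int v < 2 * e \<and> 2 * e < int v"

(* condition (C2) for (v,b), l being the lambda of the associated pair *)
definition C2 :: "nat \<Rightarrow> nat \<Rightarrow> int \<Rightarrow> bool" where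
  "C2 v b l \<longleftrightarrow> even v \<and> odd l \<and>
     l * int v * (int v - 1) - int v < 6 * int b \<and> 6 * int b < l * int v * (int v - 1) + int v"

(* Model labelled graphs H^0, H^1, H^2 on the vertex set {0..<v}; value 0 = no edge. *)
definition H0 :: "nat \<Rightarrow> int \<Rightarrow> nat \<Rightarrow> nat \<Rightarrow> int" where
  "H0 v e x y = (if x < v \<and> y < v \<and> x \<noteq> y \<and> x div 2 = y div 2
                  then (if int (x div 2) < (int v + 2 * e) div 4 then 1 else -1) else 0)"

(* H^0 exists with the prescribed numbers of +1 / -1 edges *)
definition H0_ok :: "nat \<Rightarrow> int \<Rightarrow> bool" where
  "H0_ok v e \<longleftrightarrow> even v \<and> (int v + 2 * e) mod 4 = 0 \<and> 0 \<le> (int v + 2 * e) div 4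
     \<and> 0 \<le> (int v - 2 * e) div 4 \<and> (int v - 2 * e) mod 4 = 0"

definition Hstar :: "int \<Rightarrow> int \<Rightarrow> int \<Rightarrow> int \<Rightarrow> nat \<Rightarrow> nat \<Rightarrow> nat \<Rightarrow> int" where
  "Hstar s1 s2 s3 q v x y =
     (if x < v \<and> y < v \<and> x \<noteq> y then
        (if {x, y} = {0, 1} then s1
         else if {x, y} = {0, 2} then s2
         else if {x, y} = {0, 3} then s3
         else if 4 \<le> x \<and> 4 \<le> y \<and> (x - 4) div 2 = (y - 4) div 2
           then (if int ((x - 4) div 2) < q then 1 else -1)
         else 0)
      else 0)"

definition H1 :: "nat \<Rightarrow> int \<Rightarrow> nat \<Rightarrow> nat \<Rightarrow> int" where
  "H1 v e = Hstar 1 1 (-1) ((int v - 6 + 2 * e) div 4) v"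

definition H1_ok :: "nat \<Rightarrow> int \<Rightarrow> bool" where
  "H1_ok v e \<longleftrightarrow> even v \<and> v \<ge> 4 \<and> (int v - 6 + 2 * e) mod 4 = 0 \<and> 0 \<le> (int v - 6 + 2 * e) div 4
     \<and> (int v - 2 - 2 * e) mod 4 = 0 \<and> 0 \<le> (int v - 2 - 2 * e) div 4"

definition H2 :: "nat \<Rightarrow> int \<Rightarrow> nat \<Rightarrow> nat \<Rightarrow> int" where
  "H2 v e = Hstar 1 (-1) (-1) ((int v - 2 + 2 * e) div 4) v"

definition H2_ok :: "nat \<Rightarrow> int \<Rightarrow> bool" where
  "H2_ok v e \<longleftrightarrow> even v \<and> v \<ge> 4 \<and> (int v - 2 + 2 * e) mod 4 = 0 \<and> 0 \<le> (int v - 2 + 2 * e) div 4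
     \<and> (int v - 6 - 2 * e) mod 4 = 0 \<and> 0 \<le> (int v - 6 - 2 * e) div 4"

definition defect_iso :: "'a set \<Rightarrow> 'a set multiset \<Rightarrow> int \<Rightarrow> (nat \<Rightarrow> nat \<Rightarrow> int) \<Rightarrow> bool" where
  "defect_iso V F l H \<longleftrightarrow> (\<exists>f. bij_betw f V {0..<card V} \<and>
      (\<forall>x\<in>V. \<forall>y\<in>V. x \<noteq> y \<longrightarrow> int (lam F {x, y}) - l = H (f x) (f y)))"

definition nearly_2_balanced :: "'a set \<Rightarrow> 'a set multiset \<Rightarrow> bool" where
  "nearly_2_balanced V F \<longleftrightarrow> (\<exists>l e. assoc_pair (card V) (size F) l e \<and> C2 (card V) (size F) l \<and>
     (\<forall>x\<in>V. \<forall>y\<in>V. x \<noteq> y \<longrightarrow> int (lam F {x, y}) \<in> {l - 1, l, l + 1}) \<and>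
     (if e mod 2 = int (card V div 2) mod 2
      then H0_ok (card V) e \<and> defect_iso V F l (H0 (card V) e)
      else (H1_ok (card V) e \<and> defect_iso V F l (H1 (card V) e)) \<or>
           (H2_ok (card V) e \<and> defect_iso V F l (H2 (card V) e))))"

definition three_balanced :: "'a set \<Rightarrow> 'a set multiset \<Rightarrow> bool" where
  "three_balanced V F \<longleftrightarrow> (\<forall>S\<subseteq>V. \<forall>T\<subseteq>V. card S = 3 \<longrightarrow> card T = 3 \<longrightarrow>
      \<bar>int (lam F S) - int (lam F T)\<bar> \<le> 1)"

definition NWBTS :: "'a set \<Rightarrow> 'a set multiset \<Rightarrow> bool" where
  "NWBTS V F \<longleftrightarrow> TS V F \<and> nearly_2_balanced V F \<and> three_balanced V F"

definition pcount :: "'a set set \<Rightarrow> 'a set \<Rightarrow> nat" where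
  "pcount A P = card {B\<in>A. P \<subseteq> B}"

definition NGDD :: "'a set \<Rightarrow> (nat \<Rightarrow> 'a set) \<Rightarrow> 'a set \<Rightarrow> nat \<Rightarrow> nat \<Rightarrow> nat \<Rightarrow> 'a set set \<Rightarrow> bool" where
  "NGDD V G U m n u A \<longleftrightarrow> finite V \<and>
     V = U \<union> (\<Union>i\<in>{1..m+n}. G i) \<and> card U = u \<and>
     (\<forall>i\<in>{1..m+n}. G i \<subseteq> V \<and> card (G i) = 2 \<and> G i \<inter> U = {}) \<and>
     (\<forall>i\<in>{1..m+n}. \<forall>j\<in>{1..m+n}. i \<noteq> j \<longrightarrow> G i \<inter> G j = {}) \<and>
     (\<forall>B\<in>A. B \<subseteq> V \<and> card B = 3) \<and>
     (\<forall>P. P \<subseteq> V \<longrightarrow> card P = 2 \<longrightarrow>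
        pcount A P = (if \<exists>i\<in>{1..m}. P = G i then 2
                      else if P \<subseteq> U \<or> (\<exists>i\<in>{m+1..m+n}. P = G i) then 0
                      else 1))"

definition GDD :: "'a set \<Rightarrow> 'a set \<Rightarrow> int \<Rightarrow> 'a set set \<Rightarrow> bool" where
  "GDD V U mu B \<longleftrightarrow> finite V \<and> U \<subseteq> V \<and>
     (\<forall>T\<in>B. T \<subseteq> V \<and> card T = 3 \<and> card (T \<inter> U) \<le> 1) \<and>
     (\<forall>P. P \<subseteq> V \<longrightarrow> card P = 2 \<longrightarrow> \<not> P \<subseteq> U \<longrightarrow> int (pcount B P) = mu)"

end

theory Submission
  imports Defs
begin

definition Gen :: "nat \<Rightarrow> (nat \<Rightarrow> nat \<Rightarrow> int) \<Rightarrow> nat \<Rightarrow> nat \<Rightarrow> nat \<Rightarrow> nat \<Rightarrow> int" where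
  "Gen s S q w x y = (if x < w \<and> y < w \<and> x \<noteq> y then
      (if x < s \<and> y < s then S x y
       else if s \<le> x \<and> s \<le> y \<and> (x - s) div 2 = (y - s) div 2
         then (if (x - s) div 2 < q then 1 else -1) else 0) else 0)"

lemma H0_Gen: "H0 w e = Gen 0 (\<lambda>_ _. 0) (nat ((int w + 2 * e) div 4)) w"
  unfolding H0_def Gen_def by (intro ext) auto

definition Sst :: "int \<Rightarrow> int \<Rightarrow> int \<Rightarrow> nat \<Rightarrow> nat \<Rightarrow> int" where
  "Sst s1 s2 s3 x y = (if {x, y} = {0, 1} then s1
         else if {x, y} = {0, 2} then s2
         else if {x, y} = {0, 3} then s3 else 0)"

lemma Hstar_Gen: "Hstar s1 s2 s3 q w = Gen 4 (Sst s1 s2 s3) (nat q) w"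
  unfolding Hstar_def Gen_def Sst_def
  apply (intro ext)
  apply (auto simp: doubleton_eq_iff)
  done




lemma df1: "Z < s+2*q \<Longrightarrow> s \<le> Z \<Longrightarrow> (Z-s) div 2 < (q::nat)" by linarith
lemma df2: "s+2*q \<le> Z \<Longrightarrow> q \<le> (Z-s) div (2::nat)" by linarith
lemma df3: "s \<le> Z \<Longrightarrow> (Z+2*m-s) div 2 = (Z-s) div 2 + (m::nat)" by linarith
lemma df4: "t < 2 \<Longrightarrow> (s+2*q+2*i+t-s) div 2 = q + (i::nat)" by linarith

lemma df5: assumes "even w" "even s" "s \<le> w" "t < 2" shows "(w+2*m+2*j+t-s) div 2 = (w-s) div 2 + m + (j::nat)"
proof -
  obtain a where a: "w - s = 2*a" using assms by (metis dvd_diff_nat evenE)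
  have e1: "w+2*m+2*j+t-s = 2*(a+m+j) + t" using a assms(3) by arith
  have e2: "(w-s) div 2 = a" using a by simp
  show ?thesis unfolding e1 e2 using assms(4) by presburger
qed
lemma df6: assumes "even w" "even s" "Z < w" "s \<le> Z" shows "(Z-s) div 2 < (w - s) div (2::nat)"
proof -
  obtain a where a: "w - s = 2*a" using assms by (metis dvd_diff_nat evenE)
  have "Z - s < 2*a" using a assms(3,4) by linarith
  moreover have "(w-s) div 2 = a" using a by simp
  ultimately show ?thesis by linarith
qed
lemma df7: assumes "even w" "even s" "s+2*q \<le> w" shows "q \<le> (w - s) div (2::nat)"
proof -
  obtain a where a: "w - s = 2*a" using assms by (metis dvd_diff_nat evenE)
  moreover have "(w-s) div 2 = a" using a by simp
  ultimately show ?thesis using assms(3) by linarith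
qed
definition shf :: "nat \<Rightarrow> nat \<Rightarrow> nat \<Rightarrow> nat \<Rightarrow> nat" where
  "shf s q m X = (if X < s + 2*q then X else X + 2*m)"

lemma two_eq: "2*j+t = 2*j'+(t'::nat) \<Longrightarrow> t<2 \<Longrightarrow> t'<2 \<Longrightarrow> j=j' \<and> t=t'" by presburger

lemma Gen_shift_UU:
  assumes "s + 2*q \<le> w" "X < w" "Y < w"
  shows "Gen s S (q+m) (w+2*m+2*n) (shf s q m X) (shf s q m Y) = Gen s S q w X Y"
proof (cases "X < s + 2*q")
  case True
  note tx = this df1[OF True]
  show ?thesis
  proof (cases "Y < s + 2*q")
    case True
    then show ?thesis using tx df1[OF True] assms by (auto simp: Gen_def shf_def)
  next
    case False
    then have fy: "s + 2*q \<le> Y" by simp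
    show ?thesis using fy tx df2[OF fy] df3[of s Y m] False assms by (auto simp: Gen_def shf_def)
  qed
next
  case False
  then have fx: "s + 2*q \<le> X" by simp
  note tx = False df2[OF fx] df3[of s X m]
  show ?thesis
  proof (cases "Y < s + 2*q")
    case True
    then show ?thesis using tx fx df1[OF True] assms by (auto simp: Gen_def shf_def)
  next
    case False
    then have fy: "s + 2*q \<le> Y" by simp
    show ?thesis using fy tx fx df2[OF fy] df3[of s Y m] False assms by (auto simp: Gen_def shf_def)
  qed
qed

lemma Gen_shift_UP:
  assumes "s + 2*q \<le> w" "X < w" "i < m" "t < 2"
  shows "Gen s S (q+m) (w+2*m+2*n) (shf s q m X) (s+2*q+2*i+t) = 0"
    and "Gen s S (q+m) (w+2*m+2*n) (s+2*q+2*i+t) (shf s q m X) = 0"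
proof -
  have p: "(s+2*q+2*i+t-s) div 2 = q + i" using df4 assms(4) .
  have "Gen s S (q+m) (w+2*m+2*n) (shf s q m X) (s+2*q+2*i+t) = 0 \<and>
        Gen s S (q+m) (w+2*m+2*n) (s+2*q+2*i+t) (shf s q m X) = 0"
  proof (cases "X < s + 2*q")
    case True
    then show ?thesis using df1[OF True] p assms by (auto simp: Gen_def shf_def)
  next
    case False
    then have fx: "s + 2*q \<le> X" by simp
    then show ?thesis using False df2[OF fx] df3[of s X m] p assms by (auto simp: Gen_def shf_def)
  qed
  then show "Gen s S (q+m) (w+2*m+2*n) (shf s q m X) (s+2*q+2*i+t) = 0"
    and "Gen s S (q+m) (w+2*m+2*n) (s+2*q+2*i+t) (shf s q m X) = 0" by auto
qed

lemma Gen_shift_UM: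
  assumes "s + 2*q \<le> w" "even w" "even s" "X < w" "j < n" "t < 2"
  shows "Gen s S (q+m) (w+2*m+2*n) (shf s q m X) (w+2*m+2*j+t) = 0"
    and "Gen s S (q+m) (w+2*m+2*n) (w+2*m+2*j+t) (shf s q m X) = 0"
proof -
  have p: "(w+2*m+2*j+t-s) div 2 = (w-s) div 2 + m + j" using df5 assms by simp
  have w7: "q \<le> (w - s) div 2" using df7 assms by blast
  have "Gen s S (q+m) (w+2*m+2*n) (shf s q m X) (w+2*m+2*j+t) = 0 \<and>
        Gen s S (q+m) (w+2*m+2*n) (w+2*m+2*j+t) (shf s q m X) = 0"
  proof (cases "X < s + 2*q")
    case True
    then show ?thesis using df1[OF True] p w7 assms by (auto simp: Gen_def shf_def)
  next
    case False
    then have fx: "s + 2*q \<le> X" by simp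
    then show ?thesis using False df6[of w s X] df3[of s X m] p assms by (auto simp: Gen_def shf_def)
  qed
  then show "Gen s S (q+m) (w+2*m+2*n) (shf s q m X) (w+2*m+2*j+t) = 0"
    and "Gen s S (q+m) (w+2*m+2*n) (w+2*m+2*j+t) (shf s q m X) = 0" by auto
qed

lemma Gen_shift_PM:
  assumes "s + 2*q \<le> w" "even w" "even s" "i < m" "j < n" "t < 2" "t' < 2"
  shows "Gen s S (q+m) (w+2*m+2*n) (s+2*q+2*i+t) (w+2*m+2*j+t') = 0"
    and "Gen s S (q+m) (w+2*m+2*n) (w+2*m+2*j+t') (s+2*q+2*i+t) = 0"
proof -
  have p: "(w+2*m+2*j+t'-s) div 2 = (w-s) div 2 + m + j" using df5 assms by simp
  have p2: "(s+2*q+2*i+t-s) div 2 = q + i" using df4 assms(6) .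
  have w7: "q \<le> (w - s) div 2" using df7 assms by blast
  show "Gen s S (q+m) (w+2*m+2*n) (s+2*q+2*i+t) (w+2*m+2*j+t') = 0"
    and "Gen s S (q+m) (w+2*m+2*n) (w+2*m+2*j+t') (s+2*q+2*i+t) = 0"
    using p p2 w7 assms by (auto simp: Gen_def)
qed

lemma Gen_shift_PP:
  assumes "s + 2*q \<le> w" "i < m" "i' < m" "t < 2" "t' < 2"
  shows "Gen s S (q+m) (w+2*m+2*n) (s+2*q+2*i+t) (s+2*q+2*i'+t') = (if i = i' \<and> t \<noteq> t' then 1 else 0)"
proof -
  have p: "(s+2*q+2*i+t-s) div 2 = q + i" using df4 assms(4) .
  have p2: "(s+2*q+2*i'+t'-s) div 2 = q + i'" using df4 assms(5) .
  show ?thesis using p p2 assms by (auto simp: Gen_def)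
qed

lemma Gen_shift_MM:
  assumes "s + 2*q \<le> w" "even w" "even s" "j < n" "j' < n" "t < 2" "t' < 2"
  shows "Gen s S (q+m) (w+2*m+2*n) (w+2*m+2*j+t) (w+2*m+2*j'+t') = (if j = j' \<and> t \<noteq> t' then -1 else 0)"
proof -
  have p: "(w+2*m+2*j+t-s) div 2 = (w-s) div 2 + m + j" using df5 assms by simp
  have p2: "(w+2*m+2*j'+t'-s) div 2 = (w-s) div 2 + m + j'" using df5 assms by simp
  have w7: "q \<le> (w - s) div 2" using df7 assms by blast
  show ?thesis using p p2 w7 assms two_eq[of j t j' t'] by (auto simp: Gen_def)
qed

lemma shf_inj: "shf s q m X = shf s q m Y \<Longrightarrow> X = Y"
  unfolding shf_def by (auto split: if_splits)

lemma extension: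
  fixes V U :: "'a set" and G :: "nat \<Rightarrow> 'a set" and F :: "'a set multiset"
    and g :: "'a \<Rightarrow> nat" and H :: "nat \<Rightarrow> nat \<Rightarrow> int"
  assumes finV: "finite V" and VU: "V = U \<union> (\<Union>i\<in>{1..m+n}. G i)"
    and Gi: "\<forall>i\<in>{1..m+n}. card (G i) = 2 \<and> G i \<inter> U = {}"
    and Gd: "\<forall>i\<in>{1..m+n}. \<forall>j\<in>{1..m+n}. i \<noteq> j \<longrightarrow> G i \<inter> G j = {}"
    and gb: "bij_betw g U {0..<w}" and cU: "card U = w"
    and sq: "s + 2*q \<le> w" and ew: "even w" and es: "even s"
    and lab: "\<forall>x\<in>V. \<forall>y\<in>V. x \<noteq> y \<longrightarrow> int (lam F {x, y}) - l =
        (if x \<in> U \<and> y \<in> U then Gen s S q w (g x) (g y)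
         else if \<exists>i\<in>{1..m}. {x, y} = G i then 1
         else if \<exists>i\<in>{m+1..m+n}. {x, y} = G i then -1 else 0)"
  shows "card V = w + 2*m + 2*n \<and> defect_iso V F l (Gen s S (q+m) (w+2*m+2*n))"
proof -
  define I where "I = {1..m+n}"
  have Gi': "\<And>i. i \<in> I \<Longrightarrow> \<exists>x y. G i = {x, y} \<and> x \<noteq> y" using Gi unfolding I_def
    by (simp add: card_2_iff)
  then obtain a b where ab: "\<And>i. i \<in> I \<Longrightarrow> G i = {a i, b i} \<and> a i \<noteq> b i" by metis
  define idx where "idx x = (THE i. i \<in> I \<and> x \<in> G i)" for x
  have idx_eq: "idx x = i" if "i \<in> I" "x \<in> G i" for i x
    unfolding idx_def
  proof (rule the_equality)
    show "i \<in> I \<and> x \<in> G i" using that by simp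
    fix j assume "j \<in> I \<and> x \<in> G j"
    then show "j = i" using Gd that unfolding I_def by blast
  qed
  have GU: "x \<notin> U" if "i \<in> I" "x \<in> G i" for i x using Gi that unfolding I_def by blast
  define t where "t x = (if x = a (idx x) then 0 else 1::nat)" for x
  define f where "f x = (if x \<in> U then shf s q m (g x)
      else if idx x \<le> m then s + 2*q + 2*(idx x - 1) + t x
      else w + 2*m + 2*(idx x - m - 1) + t x)" for x
  have t2: "t x < 2" for x unfolding t_def by simp
  have tne: "t x \<noteq> t y" if "i \<in> I" "x \<in> G i" "y \<in> G i" "x \<noteq> y" for i x y
    using that ab[of i] idx_eq[of i x] idx_eq[of i y] unfolding t_def by auto
  have teq: "x = y" if "i \<in> I" "x \<in> G i" "y \<in> G i" "t x = t y" for i x y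
    using tne[OF that(1-3)] that(4) by blast
  have fP: "f x = s + 2*q + 2*(i - 1) + t x" if "i \<in> {1..m}" "x \<in> G i" for i x
  proof -
    have "i \<in> I" using that unfolding I_def by auto
    then show ?thesis using that GU idx_eq unfolding f_def by auto
  qed
  have fM: "f x = w + 2*m + 2*(i - m - 1) + t x" if "i \<in> {m+1..m+n}" "x \<in> G i" for i x
  proof -
    have "i \<in> I" using that unfolding I_def by auto
    then show ?thesis using that GU idx_eq unfolding f_def by auto
  qed
  have fU: "f x = shf s q m (g x)" if "x \<in> U" for x using that unfolding f_def by simp
  have gw: "g x < w" if "x \<in> U" for x using gb that unfolding bij_betw_def by auto
  have Vcases: "x \<in> U \<or> (\<exists>i\<in>{1..m}. x \<in> G i) \<or> (\<exists>i\<in>{m+1..m+n}. x \<in> G i)" if "x \<in> V" for x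
    using that VU by (auto, metis atLeastAtMost_iff not_le_imp_less le_add1 less_imp_le_nat Suc_leI)
  have finG: "finite (G i)" if "i \<in> I" for i using Gi that unfolding I_def
    by (metis card.infinite zero_neq_numeral)
  have cW: "card (\<Union>i\<in>I. G i) = 2*(m+n)"
    by (subst card_UN_disjoint) (use finG Gd Gi in \<open>auto simp: I_def\<close>)
  have finU: "finite U" using finV VU by auto
  have cV: "card V = w + 2*m + 2*n"
    unfolding VU using cU cW finU finG Gi
    by (subst card_Un_disjoint) (auto simp: I_def)
  let ?H = "Gen s S (q+m) (w+2*m+2*n)"
  have GkI: "k = i" if "k \<in> I" "i \<in> I" "G k = G i" for k i
    using that Gd ab[of i] unfolding I_def by blast
  have L0: "int (lam F {x, y}) - l = 0"
    if "x \<in> V" "y \<in> V" "x \<noteq> y" "\<not> (x \<in> U \<and> y \<in> U)" "\<forall>k\<in>I. {x, y} \<noteq> G k" for x y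
    using lab[rule_format, OF that(1-3)] that(4,5) unfolding I_def by auto
  have Lsame: "{x, y} = G i" if "i \<in> I" "x \<in> G i" "y \<in> G i" "x \<noteq> y" for i x y
    using ab[OF that(1)] that by auto
  have LP: "int (lam F {x, y}) - l = 1"
    if "x \<in> V" "y \<in> V" "x \<noteq> y" "i \<in> {1..m}" "x \<in> G i" "y \<in> G i" for x y i
  proof -
    have "i \<in> I" using that unfolding I_def by auto
    then have "{x, y} = G i" using Lsame that by blast
    moreover have "x \<notin> U" using GU that \<open>i \<in> I\<close> by blast
    ultimately show ?thesis using lab[rule_format, OF that(1-3)] that(4) by auto
  qed
  have LM: "int (lam F {x, y}) - l = -1"
    if "x \<in> V" "y \<in> V" "x \<noteq> y" "i \<in> {m+1..m+n}" "x \<in> G i" "y \<in> G i" for x y i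
  proof -
    have iI: "i \<in> I" using that unfolding I_def by auto
    then have e: "{x, y} = G i" using Lsame that by blast
    moreover have "x \<notin> U" using GU that iI by blast
    moreover have "\<not> (\<exists>k\<in>{1..m}. {x, y} = G k)"
    proof
      assume "\<exists>k\<in>{1..m}. {x, y} = G k"
      then obtain k where k: "k \<in> {1..m}" "{x, y} = G k" by blast
      then have "k = i" using GkI[of k i] e iI unfolding I_def by auto
      then show False using k that by auto
    qed
    ultimately show ?thesis using lab[rule_format, OF that(1-3)] that(4) by auto
  qed
  have diffG: "\<forall>k\<in>I. {x, y} \<noteq> G k" if "i \<in> I" "j \<in> I" "i \<noteq> j" "x \<in> G i" "y \<in> G j" for i j x y
  proof (intro ballI notI)
    fix k assume k: "k \<in> I" "{x, y} = G k"
    then have "x \<in> G k" "y \<in> G k" by auto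
    have Ik: "k \<in> {1..m+n}" "i \<in> {1..m+n}" "j \<in> {1..m+n}" using k(1) that(1,2) unfolding I_def by auto
    have "k = i"
    proof (rule ccontr)
      assume "k \<noteq> i"
      then have "G k \<inter> G i = {}" using Gd Ik by blast
      then show False using \<open>x \<in> G k\<close> that(4) by blast
    qed
    moreover have "k = j"
    proof (rule ccontr)
      assume "k \<noteq> j"
      then have "G k \<inter> G j = {}" using Gd Ik by blast
      then show False using \<open>y \<in> G k\<close> that(5) by blast
    qed
    ultimately show False using that(3) by simp
  qed
  have key: "int (lam F {x, y}) - l = ?H (f x) (f y)" if x: "x \<in> V" and y: "y \<in> V" and xy: "x \<noteq> y" for x y
    using Vcases[OF x]
  proof (elim disjE bexE)
    assume xU: "x \<in> U"
    show ?thesis using Vcases[OF y]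
    proof (elim disjE bexE)
      assume yU: "y \<in> U"
      then show ?thesis using lab[rule_format, OF x y xy] xU fU Gen_shift_UU[OF sq gw[OF xU] gw[OF yU]] by auto
    next
      fix j assume yj: "j \<in> {1..m}" "y \<in> G j"
      have bnd: "j-1 < m" using yj by auto
      have "j \<in> I" using yj unfolding I_def by auto
      then have "y \<notin> U" "\<forall>k\<in>I. {x, y} \<noteq> G k" using GU yj xU by blast+
      then have "int (lam F {x, y}) - l = 0" using L0 x y xy by blast
      moreover have "?H (f x) (f y) = 0" using fU[OF xU] fP[OF yj] Gen_shift_UP(1)[where i="j-1" and t="t y" and m=m and n=n and S=S, OF sq gw[OF xU]] t2 yj bnd by simp
      ultimately show ?thesis by simp
    next
      fix j assume yj: "j \<in> {m+1..m+n}" "y \<in> G j"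
      have bnd: "j-m-1 < n" using yj by auto
      have "j \<in> I" using yj unfolding I_def by auto
      then have "y \<notin> U" "\<forall>k\<in>I. {x, y} \<noteq> G k" using GU yj xU by blast+
      then have "int (lam F {x, y}) - l = 0" using L0 x y xy by blast
      moreover have "?H (f x) (f y) = 0" using fU[OF xU] fM[OF yj] Gen_shift_UM(1)[where j="j-m-1" and t="t y" and m=m and n=n and S=S, OF sq ew es gw[OF xU]] t2 yj bnd by simp
      ultimately show ?thesis by simp
    qed
  next
    fix i assume xi: "i \<in> {1..m}" "x \<in> G i"
    have iI: "i \<in> I" using xi unfolding I_def by auto
    show ?thesis using Vcases[OF y]
    proof (elim disjE bexE)
      assume yU: "y \<in> U"
      have bnd: "i-1 < m" using xi by auto
      then have "x \<notin> U" "\<forall>k\<in>I. {x, y} \<noteq> G k" using GU[OF iI xi(2)] GU yU by blast+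
      then have "int (lam F {x, y}) - l = 0" using L0 x y xy by blast
      moreover have "?H (f x) (f y) = 0" using fU[OF yU] fP[OF xi] Gen_shift_UP(2)[where i="i-1" and t="t x" and m=m and n=n and S=S, OF sq gw[OF yU]] t2 xi bnd by simp
      ultimately show ?thesis by simp
    next
      fix j assume yj: "j \<in> {1..m}" "y \<in> G j"
      have bnd: "i-1 < m" "j-1 < m" using xi yj by auto
      have jI: "j \<in> I" using yj unfolding I_def by auto
      have H: "?H (f x) (f y) = (if i - 1 = j - 1 \<and> t x \<noteq> t y then 1 else 0)"
        using fP[OF xi] fP[OF yj] Gen_shift_PP[where i="i-1" and i'="j-1" and t="t x" and t'="t y" and m=m and n=n and S=S, OF sq] t2 xi yj bnd by simp
      show ?thesis
      proof (cases "i = j")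
        case True
        then have yi: "y \<in> G i" using yj by simp
        have "t x \<noteq> t y" using tne[OF iI xi(2) yi xy] .
        then have "?H (f x) (f y) = 1" using H True by simp
        then show ?thesis using LP[OF x y xy xi(1) xi(2) yi] by simp
      next
        case False
        then have "x \<notin> U" "\<forall>k\<in>I. {x, y} \<noteq> G k" using GU[OF iI xi(2)] diffG[OF iI jI _ xi(2) yj(2)] by auto
        then have "int (lam F {x, y}) - l = 0" using L0 x y xy by blast
        moreover have "i - 1 \<noteq> j - 1" using False xi yj by auto
        ultimately show ?thesis using H by simp
      qed
    next
      fix j assume yj: "j \<in> {m+1..m+n}" "y \<in> G j"
      have bnd: "i-1 < m" "j-m-1 < n" using xi yj by auto
      have jI: "j \<in> I" using yj unfolding I_def by auto
      have "i \<noteq> j" using xi yj by auto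
      then have "x \<notin> U" "\<forall>k\<in>I. {x, y} \<noteq> G k" using GU[OF iI xi(2)] diffG[OF iI jI _ xi(2) yj(2)] by auto
      then have "int (lam F {x, y}) - l = 0" using L0 x y xy by blast
      moreover have "?H (f x) (f y) = 0" using fP[OF xi] fM[OF yj] Gen_shift_PM(1)[where i="i-1" and j="j-m-1" and t="t x" and t'="t y" and m=m and n=n and S=S, OF sq ew es] t2 xi yj bnd by simp
      ultimately show ?thesis by simp
    qed
  next
    fix i assume xi: "i \<in> {m+1..m+n}" "x \<in> G i"
    have iI: "i \<in> I" using xi unfolding I_def by auto
    show ?thesis using Vcases[OF y]
    proof (elim disjE bexE)
      assume yU: "y \<in> U"
      have bnd: "i-m-1 < n" using xi by auto
      then have "x \<notin> U" "\<forall>k\<in>I. {x, y} \<noteq> G k" using GU[OF iI xi(2)] GU yU by blast+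
      then have "int (lam F {x, y}) - l = 0" using L0 x y xy by blast
      moreover have "?H (f x) (f y) = 0" using fU[OF yU] fM[OF xi] Gen_shift_UM(2)[where j="i-m-1" and t="t x" and m=m and n=n and S=S, OF sq ew es gw[OF yU]] t2 xi bnd by simp
      ultimately show ?thesis by simp
    next
      fix j assume yj: "j \<in> {1..m}" "y \<in> G j"
      have bnd: "j-1 < m" "i-m-1 < n" using xi yj by auto
      have jI: "j \<in> I" using yj unfolding I_def by auto
      have "i \<noteq> j" using xi yj by auto
      then have "x \<notin> U" "\<forall>k\<in>I. {x, y} \<noteq> G k" using GU[OF iI xi(2)] diffG[OF iI jI _ xi(2) yj(2)] by auto
      then have "int (lam F {x, y}) - l = 0" using L0 x y xy by blast
      moreover have "?H (f x) (f y) = 0" using fM[OF xi] fP[OF yj] Gen_shift_PM(2)[where i="j-1" and j="i-m-1" and t="t y" and t'="t x" and m=m and n=n and S=S, OF sq ew es] t2 xi yj bnd by simp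
      ultimately show ?thesis by simp
    next
      fix j assume yj: "j \<in> {m+1..m+n}" "y \<in> G j"
      have bnd: "i-m-1 < n" "j-m-1 < n" using xi yj by auto
      have jI: "j \<in> I" using yj unfolding I_def by auto
      have H: "?H (f x) (f y) = (if i-m-1 = j-m-1 \<and> t x \<noteq> t y then -1 else 0)"
        using fM[OF xi] fM[OF yj] Gen_shift_MM[where j="i-m-1" and j'="j-m-1" and t="t x" and t'="t y" and m=m and n=n and S=S, OF sq ew es] t2 xi yj bnd by simp
      show ?thesis
      proof (cases "i = j")
        case True
        then have yi: "y \<in> G i" using yj by simp
        have "t x \<noteq> t y" using tne[OF iI xi(2) yi xy] .
        then have "?H (f x) (f y) = -1" using H True by simp
        then show ?thesis using LM[OF x y xy xi(1) xi(2) yi] by simp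
      next
        case False
        then have "x \<notin> U" "\<forall>k\<in>I. {x, y} \<noteq> G k" using GU[OF iI xi(2)] diffG[OF iI jI _ xi(2) yj(2)] by auto
        then have "int (lam F {x, y}) - l = 0" using L0 x y xy by blast
        moreover have "i-m-1 \<noteq> j-m-1" using False xi yj by auto
        ultimately show ?thesis using H by simp
      qed
    qed
  qed
  have rng: "f x < w + 2*m + 2*n" if "x \<in> V" for x
    using Vcases[OF that]
  proof (elim disjE bexE)
    assume "x \<in> U" then show ?thesis using fU gw[of x] unfolding shf_def by auto
  next
    fix i assume "i \<in> {1..m}" "x \<in> G i"
    then show ?thesis using fP[of i x] t2[of x] sq by auto
  next
    fix i assume "i \<in> {m+1..m+n}" "x \<in> G i"
    then show ?thesis using fM[of i x] t2[of x] by auto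
  qed
  have inj: "inj_on f V"
  proof (rule inj_onI)
    fix x y assume x: "x \<in> V" and y: "y \<in> V" and fxy: "f x = f y"
    show "x = y"
      using Vcases[OF x]
    proof (elim disjE bexE)
      assume xU: "x \<in> U"
      show ?thesis using Vcases[OF y]
      proof (elim disjE bexE)
        assume yU: "y \<in> U"
        then have "g x = g y" using xU fxy fU shf_inj by metis
        then show ?thesis using gb xU yU unfolding bij_betw_def inj_on_def by blast
      next
        fix j assume "j \<in> {1..m}" "y \<in> G j"
        then show ?thesis using fP[of j y] t2[of y] fU[OF xU] gw[OF xU] fxy sq unfolding shf_def
          by (auto split: if_splits)
      next
        fix j assume "j \<in> {m+1..m+n}" "y \<in> G j"
        then show ?thesis using fM[of j y] t2[of y] fU[OF xU] gw[OF xU] fxy sq unfolding shf_def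
          by (auto split: if_splits)
      qed
    next
      fix i assume xi: "i \<in> {1..m}" "x \<in> G i"
      show ?thesis using Vcases[OF y]
      proof (elim disjE bexE)
        assume yU: "y \<in> U"
        then show ?thesis using fP[of i x] t2[of x] fU[OF yU] gw[OF yU] fxy sq xi unfolding shf_def
          by (auto split: if_splits)
      next
        fix j assume yj: "j \<in> {1..m}" "y \<in> G j"
        have "2*(i-1) + t x = 2*(j-1) + t y" using fP[OF xi] fP[OF yj] fxy by simp
        then have "i - 1 = j - 1 \<and> t x = t y" using two_eq t2 by blast
        then have "i = j" "t x = t y" using xi yj by auto
        then show ?thesis using teq[of i x y] xi yj unfolding I_def by auto
      next
        fix j assume "j \<in> {m+1..m+n}" "y \<in> G j"
        then show ?thesis using fP[OF xi] fM[of j y] t2[of x] t2[of y] fxy sq xi by auto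
      qed
    next
      fix i assume xi: "i \<in> {m+1..m+n}" "x \<in> G i"
      show ?thesis using Vcases[OF y]
      proof (elim disjE bexE)
        assume yU: "y \<in> U"
        then show ?thesis using fM[of i x] t2[of x] fU[OF yU] gw[OF yU] fxy sq xi unfolding shf_def
          by (auto split: if_splits)
      next
        fix j assume "j \<in> {1..m}" "y \<in> G j"
        then show ?thesis using fM[OF xi] fP[of j y] t2[of x] t2[of y] fxy sq xi by auto
      next
        fix j assume yj: "j \<in> {m+1..m+n}" "y \<in> G j"
        have "2*(i-m-1) + t x = 2*(j-m-1) + t y" using fM[OF xi] fM[OF yj] fxy by simp
        then have "i-m-1 = j-m-1 \<and> t x = t y" using two_eq t2 by blast
        then have "i = j" "t x = t y" using xi yj by auto
        then show ?thesis using teq[of i x y] xi yj unfolding I_def by auto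
      qed
    qed
  qed
  have "bij_betw f V {0..<card V}"
  proof -
    have sub: "f ` V \<subseteq> {0..<card V}" using rng cV by auto
    have "card (f ` V) = card V" using inj by (simp add: card_image)
    then have "f ` V = {0..<card V}" using sub by (simp add: card_subset_eq)
    then show ?thesis using inj by (simp add: bij_betw_def)
  qed
  then show ?thesis using cV key unfolding defect_iso_def by (metis cV)
qed

lemma d4: "((Y::int) + 4 * k) div 4 = Y div 4 + k" by presburger
lemma m4: "((Y::int) + 4 * k) mod 4 = Y mod 4" by presburger
lemma q4: "4 * ((Y::int) div 4) \<le> Y" by presburger
lemma q4': "0 \<le> (Y::int) div 4 \<Longrightarrow> 0 \<le> Y" by presburger

lemma lam_sum: "finite A \<Longrightarrow> finite B \<Longrightarrow>
    lam (mset_set A + mset_set B + C) S = pcount A S + pcount B S + lam C S"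
  unfolding lam_def pcount_def by simp

lemma ind_sum: "finite X \<Longrightarrow> Y \<subseteq> X \<Longrightarrow> (\<Sum>P\<in>X. if P \<in> Y then (1::int) else 0) = int (card Y)"
proof -
  assume "finite X" "Y \<subseteq> X"
  then have "(\<Sum>P\<in>X. if P \<in> Y then (1::int) else 0) = (\<Sum>P\<in>X \<inter> {P. P \<in> Y}. 1)"
    by (simp add: sum.If_cases)
  also have "X \<inter> {P. P \<in> Y} = Y" using \<open>Y \<subseteq> X\<close> by auto
  finally show ?thesis by simp
qed

lemma double_count:
  assumes "finite V" "\<forall>T\<in>A. T \<subseteq> V \<and> card T = 3"
  shows "(\<Sum>P\<in>{P. P \<subseteq> V \<and> card P = 2}. pcount A P) = 3 * card A"
proof -
  let ?Ps = "{P. P \<subseteq> V \<and> card P = 2}"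
  have finA: "finite A" using assms finite_subset[of A "Pow V"] by auto
  have finPs: "finite ?Ps" using assms(1) by simp
  have "(\<Sum>P\<in>?Ps. pcount A P) = (\<Sum>P\<in>?Ps. \<Sum>T\<in>A. if P \<subseteq> T then 1::nat else 0)"
    unfolding pcount_def using finA by (simp add: sum.inter_filter[symmetric])
  also have "\<dots> = (\<Sum>T\<in>A. \<Sum>P\<in>?Ps. if P \<subseteq> T then 1::nat else 0)" by (rule sum.swap)
  also have "\<dots> = (\<Sum>T\<in>A. 3::nat)"
  proof (rule sum.cong)
    fix T assume T: "T \<in> A"
    then have TV: "T \<subseteq> V" and cT: "card T = 3" using assms by auto
    have finT: "finite T" using cT by (metis card.infinite zero_neq_numeral)
    have "(\<Sum>P\<in>?Ps. if P \<subseteq> T then 1::nat else 0) = (\<Sum>P\<in>?Ps \<inter> {P. P \<subseteq> T}. 1::nat)"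
      using finPs by (simp add: sum.If_cases)
    also have "?Ps \<inter> {P. P \<subseteq> T} = {P. P \<subseteq> T \<and> card P = 2}" using TV by auto
    also have "(\<Sum>P\<in>{P. P \<subseteq> T \<and> card P = 2}. 1::nat) = card T choose 2"
      using n_subsets[OF finT, of 2] by simp
    finally show "(\<Sum>P\<in>?Ps. if P \<subseteq> T then 1::nat else 0) = 3" using cT by (simp add: choose_two)
  qed simp
  finally show ?thesis by simp
qed

lemma ch2: "2 * int (k choose 2) = int k * (int k - 1)"
proof -
  have "even (k * (k - 1))" by (cases "even k") auto
  then have "2 * (k choose 2) = k * (k - 1)" by (simp add: choose_two)
  then have "int (2 * (k choose 2)) = int (k * (k - 1))" by simp
  then show ?thesis by (cases "k = 0") (auto simp: of_nat_diff)
qed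

theorem lemma6p5:
  fixes V U :: "'a set" and G :: "nat \<Rightarrow> 'a set"
    and A B :: "'a set set" and C :: "'a set multiset"
    and m n u v c :: nat and l d :: int
  assumes "m mod 3 = 0" and "n mod 3 = 0" and "u mod 6 = 2 \<or> u mod 6 = 4"
    and "v = 2 * m + 2 * n + u"
    and "c < u choose 3"
    and "assoc_pair u c l d" and "C2 u c l"
    and "NGDD V G U m n u A"
    and "GDD V U (l - 1) B"
    and "NWBTS U C" and "size C = c"
    and "A \<inter> B = {}" and "A \<inter> set_mset C = {}" and "B \<inter> set_mset C = {}"
  shows "NWBTS V (mset_set A + mset_set B + C) \<and>
         3 * int (size (mset_set A + mset_set B + C)) = l * int (v choose 2) + int m - int n + d"
proof -
  have finV: "finite V" using assms(8) unfolding NGDD_def by (elim conjE) assumption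
  have VU: "V = U \<union> (\<Union>i\<in>{1..m+n}. G i)" using assms(8) unfolding NGDD_def by (elim conjE) assumption
  have cU: "card U = u" using assms(8) unfolding NGDD_def by (elim conjE) assumption
  have Gi: "\<forall>i\<in>{1..m+n}. G i \<subseteq> V \<and> card (G i) = 2 \<and> G i \<inter> U = {}" using assms(8) unfolding NGDD_def by (elim conjE) assumption
  have Gd: "\<forall>i\<in>{1..m+n}. \<forall>j\<in>{1..m+n}. i \<noteq> j \<longrightarrow> G i \<inter> G j = {}" using assms(8) unfolding NGDD_def by (elim conjE) assumption
  have Ablk: "\<forall>T\<in>A. T \<subseteq> V \<and> card T = 3" using assms(8) unfolding NGDD_def by (elim conjE) assumption
  have Apc0: "\<forall>P. P \<subseteq> V \<longrightarrow> card P = 2 \<longrightarrow>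
        pcount A P = (if \<exists>i\<in>{1..m}. P = G i then 2
                      else if P \<subseteq> U \<or> (\<exists>i\<in>{m+1..m+n}. P = G i) then 0
                      else 1)" using assms(8) unfolding NGDD_def by (elim conjE) assumption
  note Apc = Apc0[rule_format]
  have UV: "U \<subseteq> V" using assms(9) unfolding GDD_def by (elim conjE) assumption
  have Bblk: "\<forall>T\<in>B. T \<subseteq> V \<and> card T = 3 \<and> card (T \<inter> U) \<le> 1" using assms(9) unfolding GDD_def by (elim conjE) assumption
  have Bpc0: "\<forall>P. P \<subseteq> V \<longrightarrow> card P = 2 \<longrightarrow> \<not> P \<subseteq> U \<longrightarrow> int (pcount B P) = l - 1"
    using assms(9) unfolding GDD_def by (elim conjE) assumption
  note Bpc = Bpc0[rule_format]
  have TSU: "TS U C" and n2U: "nearly_2_balanced U C" and tbU: "three_balanced U C"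
    using assms(10) unfolding NWBTS_def by auto
  have finU: "finite U" and u3: "card U \<ge> 3" and Cblk: "\<forall>T\<in>#C. T \<subseteq> U \<and> card T = 3"
    using TSU unfolding TS_def by auto
  have ueven: "even u" using assms(3) by presburger
  have u4: "u \<ge> 4" using u3 cU ueven by presburger
  have finA: "finite A" using Ablk finV finite_subset[of A "Pow V"] by auto
  have finB: "finite B" using Bblk finV finite_subset[of B "Pow V"] by auto
  define F where "F = mset_set A + mset_set B + C"
  define e where "e = d + int m - int n"
  have lamF: "\<And>S. lam F S = pcount A S + pcount B S + lam C S"
    unfolding F_def using lam_sum[OF finA finB] by blast
  have finG: "finite (G i)" if "i \<in> {1..m+n}" for i using Gi that
    by (metis card.infinite zero_neq_numeral)
  have cW: "card (\<Union>i\<in>{1..m+n}. G i) = 2*(m+n)"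
    by (subst card_UN_disjoint) (use finG Gd Gi in \<open>auto\<close>)
  have cV: "card V = v"
    unfolding VU using cU cW finU finG Gi assms(4)
    by (subst card_Un_disjoint) auto
  obtain l' e' where H2B: "assoc_pair (card U) (size C) l' e' \<and> C2 (card U) (size C) l' \<and>
     (\<forall>x\<in>U. \<forall>y\<in>U. x \<noteq> y \<longrightarrow> int (lam C {x, y}) \<in> {l' - 1, l', l' + 1}) \<and>
     (if e' mod 2 = int (card U div 2) mod 2
      then H0_ok (card U) e' \<and> defect_iso U C l' (H0 (card U) e')
      else (H1_ok (card U) e' \<and> defect_iso U C l' (H1 (card U) e')) \<or>
           (H2_ok (card U) e' \<and> defect_iso U C l' (H2 (card U) e')))"
    using n2U unfolding nearly_2_balanced_def by blast
  note ap' = H2B[THEN conjunct1]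
  note lr' = H2B[THEN conjunct2, THEN conjunct2, THEN conjunct1]
  note br' = H2B[THEN conjunct2, THEN conjunct2, THEN conjunct2]
  have apd: "3 * int c = l * int (u choose 2) + d" "- int u < 2 * d" "2 * d < int u"
    using assms(6) unfolding assoc_pair_def by auto
  have ll': "l' = l \<and> e' = d"
  proof -
    have ap'': "3 * int c = l' * int (u choose 2) + e'" "- int u < 2*e'" "2*e' < int u"
      using ap' cU assms(11) unfolding assoc_pair_def by auto
    define N where "N = int (u choose 2)"
    have N2: "2*N = int u * (int u - 1)" using ch2 N_def by simp
    have "int u * 2 \<le> int u * (int u - 1)" using u4 by (intro mult_left_mono) auto
    then have Nu: "N \<ge> int u" using N2 by linarith
    have "l*N + d = l'*N + e'" using apd(1) ap''(1) N_def by simp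
    then have eq: "(l - l')*N = e' - d" by (simp add: left_diff_distrib)
    have "l = l'"
    proof (rule ccontr)
      assume ne: "l \<noteq> l'"
      show False
      proof (cases "l - l' \<ge> 1")
        case True
        then have "1 * N \<le> (l - l') * N" using Nu u4 by (intro mult_right_mono) auto
        then show False using eq Nu ap''(3) apd(2) by linarith
      next
        case False
        then have "l - l' \<le> -1" using ne by linarith
        then have "(l - l') * N \<le> (-1) * N" using Nu u4 by (intro mult_right_mono) auto
        then show False using eq Nu ap''(2) apd(3) by linarith
      qed
    qed
    then show ?thesis using eq by simp
  qed
  have pcAU: "pcount A P = 0" if "P \<subseteq> U" "card P = 2" for P
  proof -
    have "\<not> (\<exists>i\<in>{1..m}. P = G i)"
    proof
      assume "\<exists>i\<in>{1..m}. P = G i"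
      then obtain i where i: "i \<in> {1..m}" "P = G i" by blast
      then have "G i \<inter> U = {}" using Gi by auto
      moreover have "P \<noteq> {}" using that(2) by auto
      ultimately show False using i that(1) by auto
    qed
    then show ?thesis using Apc[of P] that UV by auto
  qed
  have pcBU: "pcount B P = 0" if "P \<subseteq> U" "card P = 2" for P
  proof -
    have "{T\<in>B. P \<subseteq> T} = {}"
    proof (rule ccontr)
      assume "{T\<in>B. P \<subseteq> T} \<noteq> {}"
      then obtain T where T: "T \<in> B" "P \<subseteq> T" by blast
      then have c3: "card T = 3" "card (T \<inter> U) \<le> 1" using Bblk by auto
      have "finite T" using c3(1) by (metis card.infinite zero_neq_numeral)
      then have "card P \<le> card (T \<inter> U)" using T that(1) by (intro card_mono) auto
      then show False using c3 that(2) by simp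
    qed
    then show ?thesis unfolding pcount_def by (metis card.empty)
  qed
  have pairU: "int (lam F {x, y}) = int (lam C {x, y})" if "x \<in> U" "y \<in> U" "x \<noteq> y" for x y
  proof -
    have "{x, y} \<subseteq> U" "card {x, y} = 2" using that by auto
    then show ?thesis using lamF pcAU pcBU by simp
  qed
  have pairO: "int (lam F {x, y}) - l = (if \<exists>i\<in>{1..m}. {x, y} = G i then 1
         else if \<exists>i\<in>{m+1..m+n}. {x, y} = G i then -1 else 0)"
    if "x \<in> V" "y \<in> V" "x \<noteq> y" "\<not> (x \<in> U \<and> y \<in> U)" for x y
  proof -
    have P: "{x, y} \<subseteq> V" "card {x, y} = 2" "\<not> {x, y} \<subseteq> U" using that by auto
    have "lam C {x, y} = 0" unfolding lam_def using Cblk P(3) by auto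
    then have "int (lam F {x, y}) = int (pcount A {x, y}) + (l - 1)" using lamF Bpc[OF P] by simp
    then show ?thesis using Apc[OF P(1,2)] P(3) by auto
  qed
  have Gne: "G i \<noteq> {}" if "i \<in> {1..m+n}" for i using Gi that by fastforce
  have Ginj: "i = j" if "i \<in> {1..m+n}" "j \<in> {1..m+n}" "G i = G j" for i j
  proof (rule ccontr)
    assume "i \<noteq> j"
    then have "G i \<inter> G j = {}" using Gd that(1,2) by blast
    then show False using that Gne[OF that(1)] by auto
  qed
  have count: "3 * int (size F) = l * int (v choose 2) + int m - int n + d"
  proof -
    define Ps where "Ps = {P. P \<subseteq> V \<and> card P = 2}"
    define UP where "UP = {P. P \<subseteq> U \<and> card P = 2}"
    define GP where "GP = G ` {1..m}"
    define GN where "GN = G ` {m+1..m+n}"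
    have finPs: "finite Ps" unfolding Ps_def using finV by simp
    have UPs: "UP \<subseteq> Ps" unfolding UP_def Ps_def using UV by auto
    have GPs: "GP \<subseteq> Ps" unfolding GP_def Ps_def using Gi by auto
    have GNs: "GN \<subseteq> Ps" unfolding GN_def Ps_def using Gi by auto
    have cPs: "card Ps = v choose 2" unfolding Ps_def using n_subsets[OF finV, of 2] cV by simp
    have cUP: "card UP = u choose 2" unfolding UP_def using n_subsets[OF finU, of 2] cU by simp
    have cGP: "card GP = m" unfolding GP_def
    proof (subst card_image)
      show "inj_on G {1..m}"
      proof (rule inj_onI)
        fix i j assume "i \<in> {1..m}" "j \<in> {1..m}" "G i = G j"
        then show "i = j" using Ginj[of i j] by auto
      qed
    qed simp
    have cGN: "card GN = n" unfolding GN_def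
    proof (subst card_image)
      show "inj_on G {m+1..m+n}"
      proof (rule inj_onI)
        fix i j assume "i \<in> {m+1..m+n}" "j \<in> {m+1..m+n}" "G i = G j"
        then show "i = j" using Ginj[of i j] by auto
      qed
    qed simp
    have GPi: "P \<in> GP \<longleftrightarrow> (\<exists>i\<in>{1..m}. P = G i)" for P unfolding GP_def by (rule image_iff)
    have GNi: "P \<in> GN \<longleftrightarrow> (\<exists>i\<in>{m+1..m+n}. P = G i)" for P unfolding GN_def by (rule image_iff)
    have GPU: "P \<notin> UP" if Pin: "P \<in> GP" for P
    proof -
      obtain i where i: "i \<in> {1..m}" "P = G i" using Pin[unfolded GPi] by blast
      then have iI: "i \<in> {1..m+n}" by auto
      note gu = Gi[rule_format, OF iI, THEN conjunct2, THEN conjunct2]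
      note gne = Gne[OF iI]
      have "\<not> G i \<subseteq> U" using gu gne by blast
      then show ?thesis using i unfolding UP_def by simp
    qed
    have GNU: "P \<notin> UP" if Pin: "P \<in> GN" for P
    proof -
      obtain i where i: "i \<in> {m+1..m+n}" "P = G i" using Pin[unfolded GNi] by blast
      then have iI: "i \<in> {1..m+n}" by auto
      note gu = Gi[rule_format, OF iI, THEN conjunct2, THEN conjunct2]
      note gne = Gne[OF iI]
      have "\<not> G i \<subseteq> U" using gu gne by blast
      then show ?thesis using i unfolding UP_def by simp
    qed
    have GPN: "P \<notin> GN" if Pin: "P \<in> GP" for P
    proof
      assume "P \<in> GN"
      then obtain j where j: "j \<in> {m+1..m+n}" "P = G j" unfolding GNi by blast
      obtain i where i: "i \<in> {1..m}" "P = G i" using Pin[unfolded GPi] by blast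
      have "i = j" using Ginj[of i j] i j by auto
      then show False using i j by auto
    qed
    have indA: "int (pcount A P) = 1 + (if P \<in> GP then 1 else 0) - (if P \<in> GN then 1 else 0)
        - (if P \<in> UP then 1 else 0)" if "P \<in> Ps" for P
    proof -
      have P: "P \<subseteq> V" "card P = 2" using that unfolding Ps_def by auto
      show ?thesis
      proof (cases "P \<in> GP")
        case True
        then show ?thesis using Apc[OF P] GPi GPU GPN by auto
      next
        case False
        note F1 = this
        show ?thesis
        proof (cases "P \<in> GN")
          case True
          then show ?thesis using Apc[OF P] GPi GNi GNU F1 by auto
        next
          case False
          then show ?thesis using Apc[OF P] GPi GNi F1 P unfolding UP_def by auto
        qed
      qed
    qed
    have indB: "int (pcount B P) = (l - 1) - (l - 1) * (if P \<in> UP then 1 else 0)" if "P \<in> Ps" for P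
    proof -
      have P: "P \<subseteq> V" "card P = 2" using that unfolding Ps_def by auto
      show ?thesis
      proof (cases "P \<in> UP")
        case True
        then show ?thesis using pcBU unfolding UP_def by auto
      next
        case False
        then show ?thesis using Bpc[OF P] P unfolding UP_def by auto
      qed
    qed
    have "int (3 * card A) = (\<Sum>P\<in>Ps. int (pcount A P))"
      using double_count[OF finV Ablk] unfolding Ps_def by (metis of_nat_sum)
    also have "\<dots> = (\<Sum>P\<in>Ps. 1 + (if P \<in> GP then 1 else 0) - (if P \<in> GN then 1 else 0)
        - (if P \<in> UP then (1::int) else 0))"
      using indA by (rule sum.cong[OF refl])
    also have "\<dots> = int (card Ps) + int (card GP) - int (card GN) - int (card UP)"
      using ind_sum[OF finPs UPs] ind_sum[OF finPs GPs] ind_sum[OF finPs GNs]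
      by (simp add: sum.distrib sum_subtractf)
    finally have sA: "3 * int (card A) = int (v choose 2) + int m - int n - int (u choose 2)"
      using cPs cGP cGN cUP by simp
    have Bblk': "\<forall>T\<in>B. T \<subseteq> V \<and> card T = 3" using Bblk by auto
    have "int (3 * card B) = (\<Sum>P\<in>Ps. int (pcount B P))"
      using double_count[OF finV Bblk'] unfolding Ps_def by (metis of_nat_sum)
    also have "\<dots> = (\<Sum>P\<in>Ps. (l - 1) - (l - 1) * (if P \<in> UP then (1::int) else 0))"
      using indB by (rule sum.cong[OF refl])
    also have "\<dots> = (l - 1) * int (card Ps) - (l - 1) * int (card UP)"
      using ind_sum[OF finPs UPs]
      by (simp add: sum_subtractf sum_distrib_left[symmetric])
    finally have sB: "3 * int (card B) = (l - 1) * int (v choose 2) - (l - 1) * int (u choose 2)"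
      using cPs cUP by simp
    have sF: "size F = card A + card B + c" unfolding F_def using assms(11) by simp
    have "3 * int (size F) = 3 * int (card A) + 3 * int (card B) + 3 * int c" using sF by simp
    then show ?thesis using sA sB apd(1) by (simp add: algebra_simps)
  qed
  have fin3: "finite T" if "card T = 3" for T :: "'a set" using that by (metis card.infinite zero_neq_numeral)
  have eq3: "S = T" if "S \<subseteq> T" "card S = 3" "card T = 3" for S T :: "'a set"
    using card_subset_eq[OF fin3[OF that(3)] that(1)] that(2,3) by simp
  have zero: "\<exists>S0. S0 \<subseteq> U \<and> card S0 = 3 \<and> lam C S0 = 0"
  proof (rule ccontr)
    assume nz: "\<not> (\<exists>S0. S0 \<subseteq> U \<and> card S0 = 3 \<and> lam C S0 = 0)"
    have sub: "{T. T \<subseteq> U \<and> card T = 3} \<subseteq> set_mset C"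
    proof
      fix T assume T: "T \<in> {T. T \<subseteq> U \<and> card T = 3}"
      then have "lam C T \<noteq> 0" using nz by auto
      then have "filter_mset (\<lambda>X. T \<subseteq> X) C \<noteq> {#}" unfolding lam_def by auto
      then obtain X where X: "X \<in># C" "T \<subseteq> X" by auto
      then have "card X = 3" using Cblk by auto
      then have "T = X" using eq3[OF X(2)] T by auto
      then show "T \<in> set_mset C" using X by simp
    qed
    have "card {T. T \<subseteq> U \<and> card T = 3} = u choose 3" using n_subsets[OF finU, of 3] cU by simp
    moreover have "card {T. T \<subseteq> U \<and> card T = 3} \<le> card (set_mset C)"
      using sub by (intro card_mono) auto
    moreover have "card (set_mset C) \<le> size C"
    proof -
      have "size (mset_set (set_mset C)) \<le> size C"
        by (rule size_mset_mono[OF mset_set_set_mset_msubset])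
      then show ?thesis by simp
    qed
    ultimately show False using assms(5) assms(11) by linarith
  qed
  then obtain S0 where S0: "S0 \<subseteq> U" "card S0 = 3" "lam C S0 = 0" by blast
  have le1: "lam F S \<le> 1" if S: "S \<subseteq> V" "card S = 3" for S
  proof (cases "S \<subseteq> U")
    case True
    have "pcount A S = 0"
    proof -
      have "{T\<in>A. S \<subseteq> T} = {}"
      proof (rule ccontr)
        assume "{T\<in>A. S \<subseteq> T} \<noteq> {}"
        then obtain T where T: "T \<in> A" "S \<subseteq> T" by blast
        then have "T = S" using eq3[OF T(2) S(2)] Ablk by auto
        obtain a b c' where abc: "S = {a, b, c'}" "a \<noteq> b" using S(2) card_3_iff by metis
        have "{a, b} \<subseteq> U" "card {a, b} = 2" using abc True by auto
        then have "pcount A {a, b} = 0" using pcAU by blast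
        moreover have "T \<in> {X\<in>A. {a, b} \<subseteq> X}" using T abc by auto
        ultimately show False unfolding pcount_def using finA by (force simp: card_eq_0_iff)
      qed
      then show ?thesis unfolding pcount_def by (metis card.empty)
    qed
    moreover have "pcount B S = 0"
    proof -
      have "{T\<in>B. S \<subseteq> T} = {}"
      proof (rule ccontr)
        assume "{T\<in>B. S \<subseteq> T} \<noteq> {}"
        then obtain T where T: "T \<in> B" "S \<subseteq> T" by blast
        then have "T = S" using eq3[OF T(2) S(2)] Bblk by auto
        then have "card (T \<inter> U) = 3" using True S(2) by (simp add: Int_absorb2)
        then show False using Bblk T(1) by fastforce
      qed
      then show ?thesis unfolding pcount_def by (metis card.empty)
    qed
    moreover have "lam C S \<le> 1"
    proof -
      have "\<bar>int (lam C S) - int (lam C S0)\<bar> \<le> 1" using tbU True S(2) S0 unfolding three_balanced_def by blast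
      then show ?thesis using S0(3) by simp
    qed
    ultimately show ?thesis using lamF by simp
  next
    case False
    have "lam C S = 0" unfolding lam_def using Cblk False by auto
    moreover have "pcount A S + pcount B S \<le> 1"
    proof -
      have sA: "{T\<in>A. S \<subseteq> T} \<subseteq> {S} \<inter> A" using eq3 S(2) Ablk by auto
      have sB: "{T\<in>B. S \<subseteq> T} \<subseteq> {S} \<inter> B" using eq3 S(2) Bblk by auto
      have "pcount A S \<le> card ({S} \<inter> A)" unfolding pcount_def using sA by (intro card_mono) auto
      moreover have "pcount B S \<le> card ({S} \<inter> B)" unfolding pcount_def using sB by (intro card_mono) auto
      moreover have "card ({S} \<inter> A) + card ({S} \<inter> B) \<le> 1" using assms(12)
        by (cases "S \<in> A"; cases "S \<in> B") auto
      ultimately show ?thesis by linarith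
    qed
    ultimately show ?thesis using lamF by simp
  qed
  have tb: "three_balanced V F"
    unfolding three_balanced_def
  proof (intro allI impI)
    fix S T assume "S \<subseteq> V" "T \<subseteq> V" "card S = 3" "card T = 3"
    then have "lam F S \<le> 1" "lam F T \<le> 1" using le1 by auto
    then show "\<bar>int (lam F S) - int (lam F T)\<bar> \<le> 1" by linarith
  qed
  have blkF: "\<forall>T\<in>#F. T \<subseteq> V \<and> card T = 3"
  proof
    fix T assume "T \<in># F"
    then have "T \<in> A \<or> T \<in> B \<or> T \<in># C" unfolding F_def using finA finB by auto
    then show "T \<subseteq> V \<and> card T = 3" using Ablk Bblk Cblk UV by blast
  qed
  have TSV: "TS V F"
    unfolding TS_def using finV cV assms(4) u4 blkF by simp
  have lld: "l' = l" "e' = d" using ll' by auto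
  have apV: "assoc_pair (card V) (size F) l e"
    unfolding assoc_pair_def using count cV apd(2,3) assms(4) unfolding e_def by simp
  have c2V: "C2 (card V) (size F) l"
  proof -
    have ev: "even v" using assms(4) ueven by simp
    have ol: "odd l" using assms(7) unfolding C2_def by simp
    have v2: "l * int v * (int v - 1) = 2 * (l * int (v choose 2))" using ch2[of v]
      by (simp add: mult.assoc)
    have "6 * int (size F) = 2 * (l * int (v choose 2)) + 2 * e" using count unfolding e_def by (simp add: algebra_simps)
    then have "6 * int (size F) = l * int v * (int v - 1) + 2 * e" using v2 by linarith
    then show ?thesis unfolding C2_def using ev ol cV apd(2,3) assms(4) unfolding e_def by simp
  qed
  have labU: "\<forall>x\<in>V. \<forall>y\<in>V. x \<noteq> y \<longrightarrow> int (lam F {x, y}) - l =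
        (if x \<in> U \<and> y \<in> U then H (g x) (g y)
         else if \<exists>i\<in>{1..m}. {x, y} = G i then 1
         else if \<exists>i\<in>{m+1..m+n}. {x, y} = G i then -1 else 0)"
    if "\<forall>x\<in>U. \<forall>y\<in>U. x \<noteq> y \<longrightarrow> int (lam C {x, y}) - l = H (g x) (g y)" for g H
    using that pairU pairO by auto
  have Gi': "\<forall>i\<in>{1..m+n}. card (G i) = 2 \<and> G i \<inter> U = {}" using Gi by blast
  have vv: "u + 2*m + 2*n = v" using assms(4) by simp
  have ext: "defect_iso V F l (Gen s S (q+m) v)"
    if di: "defect_iso U C l (Gen s S q u)" and sq0: "s + 2*q \<le> u" and es0: "even s" for s S q
  proof -
    obtain g where g: "bij_betw g U {0..<card U}"
      "\<forall>x\<in>U. \<forall>y\<in>U. x \<noteq> y \<longrightarrow> int (lam C {x, y}) - l = Gen s S q u (g x) (g y)"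
      using di unfolding defect_iso_def by blast
    have "card V = u + 2*m + 2*n \<and> defect_iso V F l (Gen s S (q+m) (u+2*m+2*n))"
      by (rule extension[OF finV VU Gi' Gd g(1)[unfolded cU] cU sq0 ueven es0 labU[of "Gen s S q u" g, OF g(2)]])
    then show ?thesis unfolding vv by simp
  qed
  have pairs: "\<forall>x\<in>V. \<forall>y\<in>V. x \<noteq> y \<longrightarrow> int (lam F {x, y}) \<in> {l - 1, l, l + 1}"
  proof (intro ballI impI)
    fix x y assume xy: "x \<in> V" "y \<in> V" "x \<noteq> y"
    show "int (lam F {x, y}) \<in> {l - 1, l, l + 1}"
    proof (cases "x \<in> U \<and> y \<in> U")
      case True
      then show ?thesis using pairU[of x y] lr' lld xy by auto
    next
      case False
      then show ?thesis using pairO[OF xy False] by (auto split: if_splits)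
    qed
  qed
  have vdiv: "int (card V div 2) = int m + int n + int (u div 2)" using cV assms(4) ueven by auto
  have cond: "(e mod 2 = int (card V div 2) mod 2) \<longleftrightarrow> (d mod 2 = int (u div 2) mod 2)"
    unfolding vdiv e_def by presburger
  have br: "if d mod 2 = int (u div 2) mod 2
      then H0_ok u d \<and> defect_iso U C l (H0 u d)
      else (H1_ok u d \<and> defect_iso U C l (H1 u d)) \<or> (H2_ok u d \<and> defect_iso U C l (H2 u d))"
    using br' unfolding lld cU .
  have iv: "int v = int u + 2 * int m + 2 * int n" using assms(4) by simp
  have brV: "if e mod 2 = int (card V div 2) mod 2
      then H0_ok (card V) e \<and> defect_iso V F l (H0 (card V) e)
      else (H1_ok (card V) e \<and> defect_iso V F l (H1 (card V) e)) \<or>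
           (H2_ok (card V) e \<and> defect_iso V F l (H2 (card V) e))"
  proof (cases "d mod 2 = int (u div 2) mod 2")
    case True
    then have h: "H0_ok u d" "defect_iso U C l (H0 u d)" using br by auto
    define X where "X = (int u + 2 * d) div 4"
    have X0: "0 \<le> X" using h(1) unfolding H0_ok_def X_def by simp
    have E1: "int v + 2 * e = (int u + 2 * d) + 4 * int m" unfolding e_def iv by simp
    have E2: "int v - 2 * e = (int u - 2 * d) + 4 * int n" unfolding e_def iv by simp
    have "4 * X \<le> int u + 2 * d" unfolding X_def by (rule q4)
    then have "2 * X \<le> int u" using apd(3) by linarith
    then have sq: "0 + 2 * nat X \<le> u" using X0 by linarith
    have XV: "(int v + 2 * e) div 4 = X + int m" unfolding E1 X_def by (rule d4)
    have "defect_iso V F l (Gen 0 (\<lambda>_ _. 0) (nat X + m) v)"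
      using ext[OF _ sq] h(2) unfolding H0_Gen X_def by simp
    moreover have "nat ((int v + 2 * e) div 4) = nat X + m" using XV X0 by simp
    ultimately have "defect_iso V F l (H0 v e)" unfolding H0_Gen by simp
    moreover have "H0_ok v e" using h(1) ueven assms(4) unfolding H0_ok_def E1 E2 d4 m4 by simp
    ultimately show ?thesis using True cond cV by simp
  next
    case False
    then have h: "(H1_ok u d \<and> defect_iso U C l (H1 u d)) \<or> (H2_ok u d \<and> defect_iso U C l (H2 u d))"
      using br by auto
    obtain k where k: "u = 2 * k" using ueven by blast
    have ku: "int u = 2 * int k" using k by simp
    have dk: "2 * d \<le> int u - 2" using apd(3) ku by presburger
    show ?thesis using h
    proof (elim disjE)
      assume h: "H1_ok u d \<and> defect_iso U C l (H1 u d)"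
      define X where "X = (int u - 6 + 2 * d) div 4"
      have X0: "0 \<le> X" using h unfolding H1_ok_def X_def by simp
      have E1: "int v - 6 + 2 * e = (int u - 6 + 2 * d) + 4 * int m" unfolding e_def iv by simp
      have E2: "int v - 2 - 2 * e = (int u - 2 - 2 * d) + 4 * int n" unfolding e_def iv by simp
      have "4 * X \<le> int u - 6 + 2 * d" unfolding X_def by (rule q4)
      then have "4 + 2 * X \<le> int u" using dk by linarith
      then have sq: "4 + 2 * nat X \<le> u" using X0 by linarith
      have XV: "(int v - 6 + 2 * e) div 4 = X + int m" unfolding E1 X_def by (rule d4)
      have "defect_iso V F l (Gen 4 (Sst 1 1 (-1)) (nat X + m) v)"
        using ext[OF _ sq] h unfolding H1_def Hstar_Gen X_def by simp
      moreover have "nat ((int v - 6 + 2 * e) div 4) = nat X + m" using XV X0 by simp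
      ultimately have "defect_iso V F l (H1 v e)" unfolding H1_def Hstar_Gen by simp
      moreover have "H1_ok v e" using conjunct1[OF h] ueven assms(4) unfolding H1_ok_def E1 E2 d4 m4 by simp
      ultimately show ?thesis using False cond cV by simp
    next
      assume h: "H2_ok u d \<and> defect_iso U C l (H2 u d)"
      define X where "X = (int u - 2 + 2 * d) div 4"
      have X0: "0 \<le> X" using h unfolding H2_ok_def X_def by simp
      have Y0: "0 \<le> (int u - 6 - 2 * d) div 4" using h unfolding H2_ok_def by simp
      have Y0': "0 \<le> int u - 6 - 2 * d" using Y0 by (rule q4')
      have E1: "int v - 2 + 2 * e = (int u - 2 + 2 * d) + 4 * int m" unfolding e_def iv by simp
      have E2: "int v - 6 - 2 * e = (int u - 6 - 2 * d) + 4 * int n" unfolding e_def iv by simp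
      have "4 * X \<le> int u - 2 + 2 * d" unfolding X_def by (rule q4)
      then have "4 + 2 * X \<le> int u" using Y0' by linarith
      then have sq: "4 + 2 * nat X \<le> u" using X0 by linarith
      have XV: "(int v - 2 + 2 * e) div 4 = X + int m" unfolding E1 X_def by (rule d4)
      have "defect_iso V F l (Gen 4 (Sst 1 (-1) (-1)) (nat X + m) v)"
        using ext[OF _ sq] h unfolding H2_def Hstar_Gen X_def by simp
      moreover have "nat ((int v - 2 + 2 * e) div 4) = nat X + m" using XV X0 by simp
      ultimately have "defect_iso V F l (H2 v e)" unfolding H2_def Hstar_Gen by simp
      moreover have "H2_ok v e" using conjunct1[OF h] ueven assms(4) unfolding H2_ok_def E1 E2 d4 m4 by simp
      ultimately show ?thesis using False cond cV by simp
    qed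
  qed
  have n2: "nearly_2_balanced V F"
    unfolding nearly_2_balanced_def using apV c2V pairs brV by blast
  show ?thesis using TSV tb n2 count unfolding NWBTS_def F_def by blast
qed

end
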